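(* Let $\mathcal{A}\subseteq\mathcal{P}_\infty(\mathbb{N})$ be a $C$-measurable M-family and let $\mathbf{C}=(C_n)_n$ be a sequence in $\mathcal{A}$ of pairwise disjoint sets. Then for every $N\in\mathcal{P}_\infty(\mathbb{N})$ there exists $L\in\mathcal{P}_\infty(N)$ such that $\Delta_{\mathbf{C}}(M)\in\mathcal{A}$ for all $M\in\mathcal{P}_\infty(L)$.
   Context: $\mathcal{P}_\infty(X)$: infinite subsets of $X$, topologized as a subspace of $2^X$. $C$-measurable: belonging to the smallest $\sigma$-algebra containing the open sets and closed under the Souslin operation. An M-family is a hereditary (closed under infinite subsets) family $\mathcal{A}$ such that for every sequence $(A_n)_n$ in $\mathcal{A}$ there is $A\in\mathcal{A}$ with $A\setminus\bigcup_{i\ge n}A_i$ finite for every $n$. For pairwise disjoint infinite $C_n$ with increasing enumerations $C_n=\{x^n_0<x^n_1<\cdots\}$, define $\Delta_{\mathbf{C}}:\mathcal{P}_\infty(\mathbb{N})\to\mathcal{P}_\infty(\mathbb{N})$ by $\Delta_{\mathbf{C}}(L)=\{x^{l_{2n}}_{l_{2n+1}}:n\in\mathbb{N}\}$, where $L=\{l_0<l_1<\cdots\}$. *)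

theory Defs
  imports "HOL-Analysis.Analysis"
begin

definition Pinf :: "'a set \<Rightarrow> 'a set set" where
  "Pinf X = {A. A \<subseteq> X \<and> infinite A}"

(* open subsets of P_infinity(nat), as a subspace of the Cantor space 2^nat
   (subsets of nat identified with their characteristic functions nat => bool,
    carrying the product topology of discrete bool) *)
definition Pinf_open :: "nat set set \<Rightarrow> bool" where
  "Pinf_open U \<longleftrightarrow>
     (\<exists>V :: (nat \<Rightarrow> bool) set. open V \<and> U = {A \<in> Pinf UNIV. (\<lambda>n. n \<in> A) \<in> V})"

definition souslin :: "(nat list \<Rightarrow> 'a set) \<Rightarrow> 'a set" where
  "souslin P = (\<Union>\<sigma> :: nat \<Rightarrow> nat. \<Inter>n. P (map \<sigma> [0..<Suc n]))"

inductive_set C_sets :: "'a set \<Rightarrow> ('a set \<Rightarrow> bool) \<Rightarrow> 'a set set"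
  for \<Omega> :: "'a set" and op :: "'a set \<Rightarrow> bool" where
  C_open: "op U \<Longrightarrow> U \<in> C_sets \<Omega> op"
| C_compl: "A \<in> C_sets \<Omega> op \<Longrightarrow> \<Omega> - A \<in> C_sets \<Omega> op"
| C_union: "(\<And>n::nat. A n \<in> C_sets \<Omega> op) \<Longrightarrow> (\<Union>n::nat. A n) \<in> C_sets \<Omega> op"
| C_souslin: "(\<And>s. P s \<in> C_sets \<Omega> op) \<Longrightarrow> souslin P \<in> C_sets \<Omega> op"

definition C_measurable :: "nat set set \<Rightarrow> bool" where
  "C_measurable \<A> \<longleftrightarrow> \<A> \<in> C_sets (Pinf UNIV) Pinf_open"

definition M_family :: "nat set set \<Rightarrow> bool" where
  "M_family \<A> \<longleftrightarrow>
     \<A> \<subseteq> Pinf UNIV \<and>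
     (\<forall>A\<in>\<A>. \<forall>B. B \<subseteq> A \<and> infinite B \<longrightarrow> B \<in> \<A>) \<and>
     (\<forall>As :: nat \<Rightarrow> nat set. (\<forall>n. As n \<in> \<A>) \<longrightarrow>
        (\<exists>A\<in>\<A>. \<forall>n. finite (A - (\<Union>i\<in>{n..}. As i))))"

(* Delta_C(L) = { x^{l_{2n}}_{l_{2n+1}} : n }, x^n_k the k-th element of C n *)
definition Delta :: "(nat \<Rightarrow> nat set) \<Rightarrow> nat set \<Rightarrow> nat set" where
  "Delta C L = range (\<lambda>n. Infinite_Set.enumerate (C (Infinite_Set.enumerate L (2*n)))
                                        (Infinite_Set.enumerate L (2*n+1)))"

end

theory Submission
  imports Defs
begin


definition E :: "nat \<Rightarrow> nat set \<Rightarrow> nat set \<Rightarrow> nat set set" where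
  "E m t C = {Z. infinite Z \<and> Z \<inter> {..<m} = t \<and> Z \<inter> {m..} \<subseteq> C}"

definition CR :: "nat set set \<Rightarrow> bool" where
  "CR X \<longleftrightarrow> (\<forall>m t A. infinite A \<longrightarrow> (\<exists>B\<subseteq>A. infinite B \<and> (E m t B \<subseteq> X \<or> E m t B \<inter> X = {})))"

definition RN :: "nat set set \<Rightarrow> bool" where
  "RN X \<longleftrightarrow> (\<forall>m t A. infinite A \<longrightarrow> (\<exists>B\<subseteq>A. infinite B \<and> E m t B \<inter> X = {}))"

definition EO :: "nat set set \<Rightarrow> bool" where
  "EO X \<longleftrightarrow> (\<forall>Z\<in>X. \<exists>m t C. Z \<in> E m t C \<and> E m t C \<subseteq> X)"

lemma E_mono: "C' \<inter> {m..} \<subseteq> C \<Longrightarrow> E m t C' \<subseteq> E m t C"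
  unfolding E_def by auto

lemma E_mono': "C' \<subseteq> C \<Longrightarrow> E m t C' \<subseteq> E m t C"
  unfolding E_def by auto

lemma E_Pinf: "E m t C \<subseteq> Pinf UNIV"
  unfolding E_def Pinf_def by auto

primrec fus :: "(nat \<Rightarrow> nat set \<Rightarrow> nat set) \<Rightarrow> nat set \<Rightarrow> nat \<Rightarrow> nat set" where
  "fus st A0 0 = A0"
| "fus st A0 (Suc j) = st (Suc (LEAST x. x \<in> fus st A0 j)) (fus st A0 j \<inter> {(LEAST x. x \<in> fus st A0 j)<..})"

lemma infinite_gt: "infinite (A::nat set) \<Longrightarrow> infinite (A \<inter> {b<..})"
proof -
  assume "infinite A"
  moreover have "A \<subseteq> (A \<inter> {b<..}) \<union> {..b}" by auto
  ultimately show ?thesis using finite_subset by (metis finite_Un finite_atMost)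
qed

lemma infinite_ge: "infinite (A::nat set) \<Longrightarrow> infinite (A \<inter> {b..})"
proof -
  assume "infinite A"
  moreover have "A \<subseteq> (A \<inter> {b..}) \<union> {..<b}" by auto
  ultimately show ?thesis using finite_subset by (metis finite_Un finite_lessThan)
qed

lemma fusion:
  fixes Q :: "nat \<Rightarrow> nat set \<Rightarrow> bool"
  assumes dense: "\<And>m A. infinite A \<Longrightarrow> \<exists>C\<subseteq>A. infinite C \<and> Q m C"
  and hered: "\<And>m C C'. Q m C \<Longrightarrow> C' \<subseteq> C \<Longrightarrow> infinite C' \<Longrightarrow> Q m C'"
  and A: "infinite A"
  shows "\<exists>B\<subseteq>A. infinite B \<and> B \<subseteq> {k..} \<and> Q k B \<and> (\<forall>b\<in>B. Q (Suc b) (B \<inter> {b<..}))"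
proof -
  define st where "st m X = (SOME C. C \<subseteq> X \<and> infinite C \<and> Q m C)" for m X
  have st: "st m X \<subseteq> X \<and> infinite (st m X) \<and> Q m (st m X)" if "infinite X" for m X
    unfolding st_def using someI_ex[OF dense[OF that, of m]] by blast
  define F where "F = fus st (st k (A \<inter> {k..}))"
  define b where "b j = (LEAST x. x \<in> F j)" for j
  have Fs: "F (Suc j) = st (Suc (b j)) (F j \<inter> {b j<..})" for j
    unfolding F_def b_def by simp
  have inf: "infinite (F j)" for j
  proof (induction j)
    case 0 then show ?case using st[OF infinite_ge[OF A]] by (simp add: F_def)
  next
    case (Suc j) then show ?case using st[OF infinite_gt[OF Suc]] Fs by simp
  qed
  have bF: "b j \<in> F j" for j
    unfolding b_def using inf[of j] by (metis LeastI ex_in_conv infinite_imp_nonempty)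
  have Fsub: "F (Suc j) \<subseteq> F j \<inter> {b j<..}" for j
    using Fs st[OF infinite_gt[OF inf[of j]]] by simp
  have Fdec: "j \<le> i \<Longrightarrow> F i \<subseteq> F j" for i j
  proof (induction i)
    case 0 then show ?case by simp
  next
    case (Suc i) then show ?case using Fsub[of i] by (auto simp: le_Suc_eq)
  qed
  have bSuc: "b j < b (Suc j)" for j using bF[of "Suc j"] Fsub[of j] by auto
  have smb: "strict_mono b" using bSuc by (simp add: strict_mono_Suc_iff)
  define B where "B = range b"
  have F0: "F 0 \<subseteq> A \<inter> {k..} \<and> Q k (F 0)"
    using st[OF infinite_ge[OF A]] by (simp add: F_def)
  have BF0: "B \<subseteq> F 0" unfolding B_def using bF Fdec by blast
  have infB: "infinite B" unfolding B_def
    using smb strict_mono_imp_inj_on range_inj_infinite by blast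
  have "\<forall>x\<in>B. Q (Suc x) (B \<inter> {x<..})"
  proof
    fix x assume "x \<in> B"
    then obtain j where j: "x = b j" unfolding B_def by auto
    have sub: "B \<inter> {x<..} \<subseteq> F (Suc j)"
    proof
      fix y assume "y \<in> B \<inter> {x<..}"
      then obtain i where i: "y = b i" "b j < b i" unfolding B_def j by auto
      then have "j < i" using smb by (simp add: strict_mono_less)
      then show "y \<in> F (Suc j)" using i bF[of i] Fdec[of "Suc j" i] by auto
    qed
    have Qs: "Q (Suc (b j)) (F (Suc j))" using Fs st[OF infinite_gt[OF inf[of j]]] by simp
    show "Q (Suc x) (B \<inter> {x<..})" using hered[OF Qs sub] infinite_gt[OF infB] j by simp
  qed
  moreover have "Q k B" using hered[of k "F 0" B] F0 BF0 infB by simp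
  moreover have "B \<subseteq> A \<and> B \<subseteq> {k..}" using BF0 F0 by blast
  ultimately show ?thesis using infB by blast
qed

lemma dense_fin:
  fixes P :: "nat \<Rightarrow> nat set \<Rightarrow> nat set \<Rightarrow> bool"
  assumes dense: "\<And>m t A. infinite A \<Longrightarrow> \<exists>C\<subseteq>A. infinite C \<and> P m t C"
  and hered: "\<And>m t C C'. P m t C \<Longrightarrow> C' \<subseteq> C \<Longrightarrow> infinite C' \<Longrightarrow> P m t C'"
  and T: "finite T"
  shows "infinite A \<Longrightarrow> \<exists>C\<subseteq>A. infinite C \<and> (\<forall>t\<in>T. P m t C)"
  using T
proof (induction T arbitrary: A rule: finite_induct)
  case empty then show ?case by blast
next
  case (insert t T)
  obtain C where C: "C \<subseteq> A" "infinite C" "\<forall>t\<in>T. P m t C" using insert by blast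
  obtain C' where C': "C' \<subseteq> C" "infinite C'" "P m t C'" using dense[OF C(2)] by blast
  show ?case using C C' hered by (intro exI[of _ C']) blast
qed

lemma fusion2:
  fixes P :: "nat \<Rightarrow> nat set \<Rightarrow> nat set \<Rightarrow> bool"
  assumes dense: "\<And>m t A. infinite A \<Longrightarrow> \<exists>C\<subseteq>A. infinite C \<and> P m t C"
  and hered: "\<And>m t C C'. P m t C \<Longrightarrow> C' \<subseteq> C \<Longrightarrow> infinite C' \<Longrightarrow> P m t C'"
  and A: "infinite A"
  shows "\<exists>B\<subseteq>A. infinite B \<and> B \<subseteq> {k..} \<and> (\<forall>t\<subseteq>{..<k}. P k t B) \<and>
     (\<forall>b\<in>B. \<forall>t\<subseteq>{..b}. P (Suc b) t (B \<inter> {b<..}))"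
proof -
  define Q where "Q m C = (\<forall>t\<in>Pow {..<m}. P m t C)" for m C
  have d: "\<exists>C\<subseteq>A. infinite C \<and> Q m C" if "infinite A" for m A
    unfolding Q_def by (rule dense_fin[OF dense hered finite_Pow_iff[THEN iffD2, OF finite_lessThan] that])
  have h: "Q m C'" if "Q m C" "C' \<subseteq> C" "infinite C'" for m C C'
    using that hered unfolding Q_def by metis
  obtain B where B: "B \<subseteq> A" "infinite B" "B \<subseteq> {k..}" "Q k B" "\<forall>b\<in>B. Q (Suc b) (B \<inter> {b<..})"
  proof -
    have "\<exists>B\<subseteq>A. infinite B \<and> B \<subseteq> {k..} \<and> Q k B \<and> (\<forall>b\<in>B. Q (Suc b) (B \<inter> {b<..}))"
      apply (rule fusion)
        apply (erule d)
       apply (erule (2) h)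
      apply (rule A)
      done
    then show ?thesis using that by blast
  qed
  have e: "{..b} = {..<Suc b}" for b :: nat by auto
  have "\<forall>b\<in>B. \<forall>t\<subseteq>{..b}. P (Suc b) t (B \<inter> {b<..})"
    using B(5) unfolding e Q_def by simp
  moreover have "\<forall>t\<subseteq>{..<k}. P k t B" using B(4) unfolding Q_def by simp
  ultimately show ?thesis using B(1-3) by metis
qed




lemma E_memI: "infinite Z \<Longrightarrow> Z \<inter> {..<m} = t \<Longrightarrow> Z \<inter> {m..} \<subseteq> C \<Longrightarrow> Z \<in> E m t C"
  unfolding E_def by auto

lemma E_memD: "Z \<in> E m t C \<Longrightarrow> infinite Z \<and> Z \<inter> {..<m} = t \<and> Z \<inter> {m..} \<subseteq> C"
  unfolding E_def by auto

lemma exists_big: "infinite (Z::nat set) \<Longrightarrow> \<exists>y\<in>Z. n \<le> y"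
proof -
  assume "infinite Z"
  then have "Z \<inter> {n..} \<noteq> {}" using infinite_ge[of Z n] by (metis finite.emptyI)
  then show ?thesis by auto
qed

lemma RN_UN:
  fixes N :: "nat \<Rightarrow> nat set set"
  assumes N: "\<And>n. RN (N n)"
  shows "RN (\<Union>n. N n)"
  unfolding RN_def
proof (intro allI impI)
  fix k s A assume A: "infinite (A::nat set)"
  define P where "P m t C = (\<forall>n\<le>m. E m t C \<inter> N n = {})" for m t C
  have dj: "infinite A' \<Longrightarrow> \<exists>C\<subseteq>A'. infinite C \<and> (\<forall>n\<le>j. E m t C \<inter> N n = {})" for j m t A'
  proof (induction j arbitrary: A')
    case 0
    obtain C where "C \<subseteq> A'" "infinite C" "E m t C \<inter> N 0 = {}"
      using N[of 0] 0 unfolding RN_def by blast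
    then show ?case by (intro exI[of _ C]) simp
  next
    case (Suc j)
    obtain C where C: "C \<subseteq> A'" "infinite C" "\<forall>n\<le>j. E m t C \<inter> N n = {}" using Suc by blast
    obtain C' where C': "C' \<subseteq> C" "infinite C'" "E m t C' \<inter> N (Suc j) = {}"
      using N[of "Suc j"] C(2) unfolding RN_def by blast
    have "\<forall>n\<le>Suc j. E m t C' \<inter> N n = {}"
    proof (intro allI impI)
      fix n assume "n \<le> Suc j"
      then consider "n \<le> j" | "n = Suc j" using le_Suc_eq by blast
      then show "E m t C' \<inter> N n = {}"
      proof cases
        case 1 then show ?thesis using C(3) E_mono'[OF C'(1), of m t] by blast
      qed (use C' in simp)
    qed
    moreover have "C' \<subseteq> A'" using C(1) C'(1) by blast
    ultimately show ?case using C'(2) by blast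
  qed
  have dense: "\<exists>C\<subseteq>A'. infinite C \<and> P m t C" if "infinite A'" for m t A'
    unfolding P_def using dj[OF that] by blast
  have hered: "P m t C'" if "P m t C" "C' \<subseteq> C" "infinite C'" for m t C C'
    using that E_mono'[OF that(2)] unfolding P_def by blast
  obtain B where B: "B \<subseteq> A" "infinite B" "B \<subseteq> {k..}"
     "\<forall>b\<in>B. \<forall>t\<subseteq>{..b}. P (Suc b) t (B \<inter> {b<..})"
  proof -
    have "\<exists>B\<subseteq>A. infinite B \<and> B \<subseteq> {k..} \<and> (\<forall>t\<subseteq>{..<k}. P k t B) \<and>
     (\<forall>b\<in>B. \<forall>t\<subseteq>{..b}. P (Suc b) t (B \<inter> {b<..}))"
      apply (rule fusion2) apply (erule dense) apply (erule (2) hered) by (rule A)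
    then show ?thesis using that by blast
  qed
  have "E k s B \<inter> (\<Union>n. N n) = {}"
  proof (rule ccontr)
    assume "E k s B \<inter> (\<Union>n. N n) \<noteq> {}"
    then obtain Z n where Z: "Z \<in> E k s B" "Z \<in> N n" by blast
    note ZD = E_memD[OF Z(1)]
    obtain b where b: "b \<in> Z" "max k n \<le> b" using exists_big[of Z "max k n"] ZD by blast
    have bB: "b \<in> B" using b ZD by auto
    have Pb: "P (Suc b) (Z \<inter> {..b}) (B \<inter> {b<..})"
      using B(4) bB Int_lower2 by simp
    have "Z \<in> E (Suc b) (Z \<inter> {..b}) (B \<inter> {b<..})"
    proof (rule E_memI)
      show "infinite Z" using ZD by simp
      show "Z \<inter> {..<Suc b} = Z \<inter> {..b}" by auto
      show "Z \<inter> {Suc b..} \<subseteq> B \<inter> {b<..}" using ZD b by auto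
    qed
    moreover have "n \<le> Suc b" using b by simp
    ultimately have "E (Suc b) (Z \<inter> {..b}) (B \<inter> {b<..}) \<inter> N n = {}" using Pb unfolding P_def by simp
    then show False using Z(2) \<open>Z \<in> E (Suc b) (Z \<inter> {..b}) (B \<inter> {b<..})\<close> by blast
  qed
  then show "\<exists>B'\<subseteq>A. infinite B' \<and> E k s B' \<inter> (\<Union>n. N n) = {}" using B by blast
qed




lemma EO_CR:
  assumes EO: "EO X"
  shows "CR X"
  unfolding CR_def
proof (intro allI impI)
  fix k s A assume A: "infinite (A::nat set)"
  define dec where "dec m t C = (E m t C \<subseteq> X \<or> (\<forall>C'. C' \<subseteq> C \<longrightarrow> infinite C' \<longrightarrow> \<not> E m t C' \<subseteq> X))"
    for m t C
  have dense: "\<exists>C\<subseteq>A'. infinite C \<and> dec m t C" if "infinite A'" for m t A'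
  proof (cases "\<exists>C'\<subseteq>A'. infinite C' \<and> E m t C' \<subseteq> X")
    case True
    then obtain C' where "C' \<subseteq> A'" "infinite C'" "E m t C' \<subseteq> X" by blast
    then show ?thesis unfolding dec_def by blast
  next
    case False
    then have "dec m t A'" unfolding dec_def by blast
    then show ?thesis using that by blast
  qed
  have hered: "dec m t C'" if "dec m t C" "C' \<subseteq> C" "infinite C'" for m t C C'
  proof -
    have "E m t C' \<subseteq> E m t C" using E_mono'[OF that(2)] .
    then show ?thesis using that(1,2) unfolding dec_def by (meson order_trans)
  qed
  obtain B where B: "B \<subseteq> A" "infinite B" "B \<subseteq> {k..}" "\<forall>t\<subseteq>{..<k}. dec k t B"
     "\<forall>b\<in>B. \<forall>t\<subseteq>{..b}. dec (Suc b) t (B \<inter> {b<..})"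
  proof -
    have "\<exists>B\<subseteq>A. infinite B \<and> B \<subseteq> {k..} \<and> (\<forall>t\<subseteq>{..<k}. dec k t B) \<and>
     (\<forall>b\<in>B. \<forall>t\<subseteq>{..b}. dec (Suc b) t (B \<inter> {b<..}))"
      apply (rule fusion2) apply (erule dense) apply (erule (2) hered) by (rule A)
    then show ?thesis using that by blast
  qed
  show "\<exists>B\<subseteq>A. infinite B \<and> (E k s B \<subseteq> X \<or> E k s B \<inter> X = {})"
  proof (cases "s \<subseteq> {..<k}")
    case False
    then have "E k s B = {}" unfolding E_def by auto
    then show ?thesis using B by blast
  next
    case sk: True
    show ?thesis
    proof (cases "E k s B \<subseteq> X")
      case True then show ?thesis using B by blast
    next
      case False
      define bad where "bad m t = (\<forall>C'. C' \<subseteq> B \<longrightarrow> infinite C' \<longrightarrow> \<not> E m t C' \<subseteq> X)" for m t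
      have root: "bad k s" using B(4) sk False unfolding dec_def bad_def by blast
      have fin: "finite {b\<in>B. m \<le> b \<and> \<not> bad (Suc b) (insert b t)}"
        if bmt: "bad m t" and tm: "t \<subseteq> {..<m}" for m t
      proof (rule ccontr)
        define F where "F = {b\<in>B. m \<le> b \<and> \<not> bad (Suc b) (insert b t)}"
        assume "infinite {b\<in>B. m \<le> b \<and> \<not> bad (Suc b) (insert b t)}"
        then have infF: "infinite F" unfolding F_def .
        have FB: "F \<subseteq> B" unfolding F_def by blast
        have good: "E (Suc b) (insert b t) (B \<inter> {b<..}) \<subseteq> X" if bF: "b \<in> F" for b
        proof -
          have bB: "b \<in> B" and mb: "m \<le> b" and nb: "\<not> bad (Suc b) (insert b t)"
            using bF unfolding F_def by auto
          obtain C' where C': "C' \<subseteq> B" "infinite C'" "E (Suc b) (insert b t) C' \<subseteq> X"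
            using nb unfolding bad_def by blast
          have "insert b t \<subseteq> {..b}" using tm mb by auto
          then have d: "dec (Suc b) (insert b t) (B \<inter> {b<..})" using B(5) bB by simp
          have "C' \<inter> {b<..} \<subseteq> B \<inter> {b<..}" using C'(1) by blast
          moreover have "infinite (C' \<inter> {b<..})" using infinite_gt[OF C'(2)] .
          moreover have "E (Suc b) (insert b t) (C' \<inter> {b<..}) \<subseteq> X"
            using E_mono'[of "C' \<inter> {b<..}" C'] C'(3) by blast
          ultimately show ?thesis using d unfolding dec_def by blast
        qed
        have "E m t F \<subseteq> X"
        proof
          fix Z assume Z: "Z \<in> E m t F"
          note ZD = E_memD[OF Z]
          have ne: "Z \<inter> {m..} \<noteq> {}" using infinite_ge[of Z m] ZD by (metis finite.emptyI)
          define b where "b = (LEAST x. x \<in> Z \<inter> {m..})"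
          have bZ: "b \<in> Z \<inter> {m..}" unfolding b_def using ne by (metis LeastI ex_in_conv)
          have bmin: "\<And>x. x \<in> Z \<inter> {m..} \<Longrightarrow> b \<le> x" unfolding b_def by (rule Least_le)
          have bF: "b \<in> F" using bZ ZD by blast
          have "Z \<in> E (Suc b) (insert b t) (B \<inter> {b<..})"
          proof (rule E_memI)
            show "infinite Z" using ZD by simp
            show "Z \<inter> {..<Suc b} = insert b t"
            proof
              show "Z \<inter> {..<Suc b} \<subseteq> insert b t"
              proof
                fix x assume x: "x \<in> Z \<inter> {..<Suc b}"
                show "x \<in> insert b t"
                proof (cases "x < m")
                  case True then show ?thesis using x ZD by blast
                next
                  case False then have "b \<le> x" using bmin x by auto
                  then show ?thesis using x by auto
                qed
              qed
              show "insert b t \<subseteq> Z \<inter> {..<Suc b}" using bZ ZD tm bZ by auto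
            qed
            show "Z \<inter> {Suc b..} \<subseteq> B \<inter> {b<..}" using ZD FB bZ by auto
          qed
          then show "Z \<in> X" using good[OF bF] by blast
        qed
        then show False using bmt FB infF unfolding bad_def by blast
      qed
      define P2 where "P2 m t C = (bad m t \<and> t \<subseteq> {..<m} \<longrightarrow>
          (\<forall>b\<in>C \<inter> B. m \<le> b \<longrightarrow> bad (Suc b) (insert b t)))" for m t C
      have dense2: "\<exists>C\<subseteq>A'. infinite C \<and> P2 m t C" if A': "infinite A'" for m t A'
      proof (cases "bad m t \<and> t \<subseteq> {..<m}")
        case True
        define F where "F = {b\<in>B. m \<le> b \<and> \<not> bad (Suc b) (insert b t)}"
        have "finite F" unfolding F_def using fin True by blast
        then have "infinite (A' - F)" using A' by (simp add: Diff_infinite_finite)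
        moreover have "P2 m t (A' - F)" unfolding P2_def F_def by blast
        ultimately show ?thesis by blast
      next
        case False
        then have "P2 m t A'" unfolding P2_def by blast
        then show ?thesis using A' by blast
      qed
      have hered2: "P2 m t C'" if "P2 m t C" "C' \<subseteq> C" "infinite C'" for m t C C'
        using that unfolding P2_def by blast
      obtain B' where B': "B' \<subseteq> B" "infinite B'" "B' \<subseteq> {k..}" "\<forall>t\<subseteq>{..<k}. P2 k t B'"
        "\<forall>b\<in>B'. \<forall>t\<subseteq>{..b}. P2 (Suc b) t (B' \<inter> {b<..})"
      proof -
        have "\<exists>B'\<subseteq>B. infinite B' \<and> B' \<subseteq> {k..} \<and> (\<forall>t\<subseteq>{..<k}. P2 k t B') \<and>
         (\<forall>b\<in>B'. \<forall>t\<subseteq>{..b}. P2 (Suc b) t (B' \<inter> {b<..}))"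
          apply (rule fusion2) apply (erule dense2) apply (erule (2) hered2) by (rule B(2))
        then show ?thesis using that by blast
      qed
      have allbad: "bad (Suc y) (Z \<inter> {..y})" if Z: "Z \<in> E k s B'" and "y \<in> Z" "k \<le> y" for Z y
        using that(2,3)
      proof (induction y rule: less_induct)
        case (less y)
        note ZD = E_memD[OF Z]
        have yB': "y \<in> B'" using less.prems ZD by auto
        have yB: "y \<in> B" using yB' B'(1) by blast
        show ?case
        proof (cases "Z \<inter> {k..<y} = {}")
          case True
          have eq: "Z \<inter> {..y} = insert y s"
          proof
            show "Z \<inter> {..y} \<subseteq> insert y s"
            proof
              fix x assume x: "x \<in> Z \<inter> {..y}"
              show "x \<in> insert y s"
              proof (cases "x < k")
                case True then show ?thesis using x ZD by blast
              next
                case False then show ?thesis using x \<open>Z \<inter> {k..<y} = {}\<close> by fastforce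
              qed
            qed
            show "insert y s \<subseteq> Z \<inter> {..y}" using less.prems ZD by auto
          qed
          have "P2 k s B'" using B'(4) sk by blast
          then have "bad (Suc y) (insert y s)" unfolding P2_def using root sk yB' yB less.prems by blast
          then show ?thesis using eq by simp
        next
          case False
          define y' where "y' = Max (Z \<inter> {k..<y})"
          have fin': "finite (Z \<inter> {k..<y})" by simp
          have y'in: "y' \<in> Z \<inter> {k..<y}" unfolding y'_def using Max_in[OF fin' False] .
          have y'max: "\<And>x. x \<in> Z \<inter> {k..<y} \<Longrightarrow> x \<le> y'" unfolding y'_def using fin' by simp
          have IH: "bad (Suc y') (Z \<inter> {..y'})" using less.IH[of y'] y'in by auto
          have y'B': "y' \<in> B'" using y'in ZD by auto
          have "P2 (Suc y') (Z \<inter> {..y'}) (B' \<inter> {y'<..})" using B'(5) y'B' by simp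
          moreover have "Z \<inter> {..y'} \<subseteq> {..<Suc y'}" by auto
          moreover have "y \<in> B' \<inter> {y'<..} \<inter> B" using yB' yB y'in by auto
          moreover have "Suc y' \<le> y" using y'in by auto
          ultimately have "bad (Suc y) (insert y (Z \<inter> {..y'}))" using IH unfolding P2_def by blast
          moreover have "insert y (Z \<inter> {..y'}) = Z \<inter> {..y}"
          proof
            show "insert y (Z \<inter> {..y'}) \<subseteq> Z \<inter> {..y}" using less.prems y'in by auto
            show "Z \<inter> {..y} \<subseteq> insert y (Z \<inter> {..y'})"
            proof
              fix x assume x: "x \<in> Z \<inter> {..y}"
              show "x \<in> insert y (Z \<inter> {..y'})"
              proof (cases "x < k")
                case True then show ?thesis using x y'in by auto
              next
                case False
                show ?thesis
                proof (cases "x = y")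
                  case False
                  then have "x \<in> Z \<inter> {k..<y}" using x \<open>\<not> x < k\<close> by auto
                  then show ?thesis using y'max x by auto
                qed simp
              qed
            qed
          qed
          ultimately show ?thesis by simp
        qed
      qed
      have "E k s B' \<inter> X = {}"
      proof (rule ccontr)
        assume "E k s B' \<inter> X \<noteq> {}"
        then obtain Z where Z: "Z \<in> E k s B'" "Z \<in> X" by blast
        note ZD = E_memD[OF Z(1)]
        obtain m' t' C where N: "Z \<in> E m' t' C" "E m' t' C \<subseteq> X" using EO Z(2) unfolding EO_def by blast
        note ND = E_memD[OF N(1)]
        obtain y where y: "y \<in> Z" "max k m' \<le> y" using exists_big[of Z "max k m'"] ZD by blast
        have b: "bad (Suc y) (Z \<inter> {..y})" using allbad[OF Z(1) y(1)] y(2) by simp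
        have sub: "B' \<inter> C \<subseteq> B" using B'(1) by blast
        have "Z \<inter> {max k m'..} \<subseteq> B' \<inter> C" using ZD ND by auto
        then have inf: "infinite (B' \<inter> C)"
          using infinite_ge[of Z "max k m'"] ZD finite_subset by blast
        have "E (Suc y) (Z \<inter> {..y}) (B' \<inter> C) \<subseteq> E m' t' C"
        proof
          fix W assume W: "W \<in> E (Suc y) (Z \<inter> {..y}) (B' \<inter> C)"
          note WD = E_memD[OF W]
          show "W \<in> E m' t' C"
          proof (rule E_memI)
            show "infinite W" using WD by simp
            have "W \<inter> {..<m'} = (W \<inter> {..<Suc y}) \<inter> {..<m'}" using y(2) by auto
            also have "\<dots> = Z \<inter> {..<m'}" using WD y(2) by auto
            finally show "W \<inter> {..<m'} = t'" using ND by simp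
            show "W \<inter> {m'..} \<subseteq> C"
            proof
              fix x assume x: "x \<in> W \<inter> {m'..}"
              show "x \<in> C"
              proof (cases "x \<le> y")
                case True
                then have "x \<in> W \<inter> {..<Suc y}" using x by auto
                then have "x \<in> Z" using WD by auto
                then show ?thesis using ND x by auto
              next
                case False then show ?thesis using WD x by auto
              qed
            qed
          qed
        qed
        then have "E (Suc y) (Z \<inter> {..y}) (B' \<inter> C) \<subseteq> X" using N(2) by blast
        then show False using b sub inf unfolding bad_def by blast
      qed
      then show ?thesis using B'(1,2) B(1) by (meson order_trans)
    qed
  qed
qed




lemma CR_compl: "CR X \<Longrightarrow> CR (Pinf UNIV - X)"
  unfolding CR_def
proof (intro allI impI)
  fix m t A assume "\<forall>m t A. infinite A \<longrightarrow> (\<exists>B\<subseteq>A. infinite B \<and> (E m t B \<subseteq> X \<or> E m t B \<inter> X = {}))"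
    and A: "infinite (A::nat set)"
  then obtain B where B: "B \<subseteq> A" "infinite B" "E m t B \<subseteq> X \<or> E m t B \<inter> X = {}" by blast
  have "E m t B \<subseteq> Pinf UNIV" by (rule E_Pinf)
  then have "E m t B \<subseteq> Pinf UNIV - X \<or> E m t B \<inter> (Pinf UNIV - X) = {}" using B(3) by blast
  then show "\<exists>B\<subseteq>A. infinite B \<and> (E m t B \<subseteq> Pinf UNIV - X \<or> E m t B \<inter> (Pinf UNIV - X) = {})"
    using B(1,2) by blast
qed

lemma CR_gen:
  assumes H: "CR H" and R: "RN R" and s1: "H - R \<subseteq> X" and s2: "X \<subseteq> H \<union> R"
  shows "CR X"
  unfolding CR_def
proof (intro allI impI)
  fix m t A assume A: "infinite (A::nat set)"
  obtain B1 where B1: "B1 \<subseteq> A" "infinite B1" "E m t B1 \<inter> R = {}" using R A unfolding RN_def by blast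
  obtain B2 where B2: "B2 \<subseteq> B1" "infinite B2" "E m t B2 \<subseteq> H \<or> E m t B2 \<inter> H = {}"
    using H B1(2) unfolding CR_def by blast
  have E21: "E m t B2 \<subseteq> E m t B1" using E_mono'[OF B2(1)] .
  have "E m t B2 \<subseteq> X \<or> E m t B2 \<inter> X = {}"
  proof (cases "E m t B2 \<subseteq> H")
    case True then show ?thesis using E21 B1(3) s1 by blast
  next
    case False then show ?thesis using B2(3) E21 B1(3) s2 by blast
  qed
  then show "\<exists>B\<subseteq>A. infinite B \<and> (E m t B \<subseteq> X \<or> E m t B \<inter> X = {})" using B2(1,2) B1(1)
    by (meson order_trans)
qed

lemma CR_empty: "CR {}" unfolding CR_def by blast

lemma RN_CR: "RN R \<Longrightarrow> CR R"
  by (rule CR_gen[OF CR_empty]) auto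

definition intE :: "nat set set \<Rightarrow> nat set set" where
  "intE X = {Z. \<exists>m t C. Z \<in> E m t C \<and> E m t C \<subseteq> X}"

lemma intE_sub: "intE X \<subseteq> X" unfolding intE_def by blast

lemma EO_UN: "(\<And>n::nat. EO (I n)) \<Longrightarrow> EO (\<Union>n. I n)"
  unfolding EO_def
proof
  fix Z assume I: "\<And>n. \<forall>Z\<in>I n. \<exists>m t C. Z \<in> E m t C \<and> E m t C \<subseteq> I n" and Z: "Z \<in> (\<Union>n. I n)"
  then obtain n where "Z \<in> I n" by blast
  then obtain m t C where "Z \<in> E m t C" "E m t C \<subseteq> I n" using I by blast
  then show "\<exists>m t C. Z \<in> E m t C \<and> E m t C \<subseteq> (\<Union>n. I n)" by blast
qed

lemma EO_intE: "EO (intE X)"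
  unfolding EO_def intE_def by blast

lemma CR_RN_rest: assumes "CR X" shows "RN (X - intE X)"
  unfolding RN_def
proof (intro allI impI)
  fix m t A assume A: "infinite (A::nat set)"
  obtain B where B: "B \<subseteq> A" "infinite B" "E m t B \<subseteq> X \<or> E m t B \<inter> X = {}"
    using assms A unfolding CR_def by blast
  have "E m t B \<inter> (X - intE X) = {}"
  proof (cases "E m t B \<subseteq> X")
    case True
    then have "E m t B \<subseteq> intE X" unfolding intE_def by blast
    then show ?thesis by blast
  next
    case False then show ?thesis using B(3) by blast
  qed
  then show "\<exists>B\<subseteq>A. infinite B \<and> E m t B \<inter> (X - intE X) = {}" using B by blast
qed

lemma CR_UN:
  fixes X :: "nat \<Rightarrow> nat set set"
  assumes "\<And>n. CR (X n)"
  shows "CR (\<Union>n. X n)"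
proof -
  have I: "CR (\<Union>n. intE (X n))" by (rule EO_CR, rule EO_UN, rule EO_intE)
  have R: "RN (\<Union>n. X n - intE (X n))" by (rule RN_UN, rule CR_RN_rest, rule assms)
  show ?thesis
  proof (rule CR_gen[OF I R])
    show "(\<Union>n. intE (X n)) - (\<Union>n. X n - intE (X n)) \<subseteq> (\<Union>n. X n)" using intE_sub by blast
    show "(\<Union>n. X n) \<subseteq> (\<Union>n. intE (X n)) \<union> (\<Union>n. X n - intE (X n))" by blast
  qed
qed

definition K :: "nat set set \<Rightarrow> bool" where
  "K X \<longleftrightarrow> X \<subseteq> Pinf UNIV \<and> CR X"

lemma K_compl: "K X \<Longrightarrow> K (Pinf UNIV - X)"
  unfolding K_def using CR_compl by blast

lemma K_UN: "(\<And>n::nat. K (X n)) \<Longrightarrow> K (\<Union>n. X n)"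
  unfolding K_def using CR_UN by blast

lemma K_Un: assumes "K X" "K Y" shows "K (X \<union> Y)"
proof -
  have "X \<union> Y = (\<Union>n::nat. if n = 0 then X else Y)" by (auto split: if_splits)
  moreover have "K (\<Union>n::nat. if n = 0 then X else Y)" by (rule K_UN) (simp add: assms(1) assms(2))
  ultimately show ?thesis by simp
qed

lemma K_Int: assumes "K X" "K Y" shows "K (X \<inter> Y)"
proof -
  have "X \<inter> Y = Pinf UNIV - ((Pinf UNIV - X) \<union> (Pinf UNIV - Y))"
    using assms unfolding K_def by blast
  moreover have "K (Pinf UNIV - ((Pinf UNIV - X) \<union> (Pinf UNIV - Y)))"
    by (intro K_compl K_Un assms)
  ultimately show ?thesis by simp
qed

lemma K_Diff: assumes "K X" "K Y" shows "K (X - Y)"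
proof -
  have "X - Y = X \<inter> (Pinf UNIV - Y)" using assms unfolding K_def by blast
  moreover have "K (X \<inter> (Pinf UNIV - Y))" by (intro K_Int K_compl assms)
  ultimately show ?thesis by simp
qed

lemma K_Pinf: "K (Pinf UNIV)"
proof -
  have "K {}" using CR_empty by (simp add: K_def)
  then show ?thesis using K_compl[of "{}"] by simp
qed

definition extE :: "nat set set \<Rightarrow> nat set set" where
  "extE X = {Z. \<exists>m t C. Z \<in> E m t C \<and> E m t C \<inter> X = {}}"

definition hullE :: "nat set set \<Rightarrow> nat set set" where
  "hullE X = Pinf UNIV - extE X"

lemma EO_ext: "EO (extE X)" unfolding EO_def
  proof
    fix Z assume "Z \<in> extE X"
    then obtain m t C where "Z \<in> E m t C" "E m t C \<inter> X = {}" unfolding extE_def by blast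
    moreover then have "E m t C \<subseteq> extE X" unfolding extE_def by blast
    ultimately show "\<exists>m t C. Z \<in> E m t C \<and> E m t C \<subseteq> extE X" by blast
  qed
lemma K_hull: "K (hullE X)"
proof -
  have "CR (extE X)" by (rule EO_CR[OF EO_ext])
  then have "CR (Pinf UNIV - extE X)" by (rule CR_compl)
  moreover have "Pinf UNIV - extE X \<subseteq> Pinf UNIV" by (rule Diff_subset)
  ultimately show ?thesis unfolding K_def hullE_def by (rule conjI[rotated])
qed
lemma hull_sup: "X \<subseteq> Pinf UNIV \<Longrightarrow> X \<subseteq> hullE X"
  unfolding hullE_def extE_def by fastforce

lemma hull_prop:
  assumes "CR Z" "Z \<subseteq> hullE X - X" shows "RN Z"
  unfolding RN_def
proof (intro allI impI)
  fix m t A assume A: "infinite (A::nat set)"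
  obtain B where B: "B \<subseteq> A" "infinite B" "E m t B \<subseteq> Z \<or> E m t B \<inter> Z = {}"
    using assms A unfolding CR_def by blast
  have "E m t B \<inter> Z = {}"
  proof (cases "E m t B \<subseteq> Z")
    case True
    then have "E m t B \<inter> X = {}" using assms(2) by blast
    then have "E m t B \<subseteq> extE X" unfolding extE_def by blast
    moreover have "E m t B \<subseteq> hullE X" using True assms(2) by blast
    ultimately have "E m t B = {}" unfolding hullE_def by blast
    then show ?thesis by simp
  next
    case False then show ?thesis using B(3) by blast
  qed
  then show "\<exists>B\<subseteq>A. infinite B \<and> E m t B \<inter> Z = {}" using B by blast
qed

primrec pth :: "(nat list \<Rightarrow> nat) \<Rightarrow> nat \<Rightarrow> nat list" where
  "pth c 0 = []"
| "pth c (Suc n) = pth c n @ [c (pth c n)]"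

lemma pth_map: "pth c n = map (\<lambda>i. c (pth c i)) [0..<n]"
  by (induction n) auto

lemma K_souslin:
  fixes P :: "nat list \<Rightarrow> nat set set"
  assumes KP: "\<And>s. K (P s)"
  shows "K (souslin P)"
proof -
  define S where "S u = {Z. \<exists>\<sigma>. map \<sigma> [0..<length u] = u \<and> (\<forall>n. Z \<in> P (map \<sigma> [0..<Suc n]))}" for u
  have S0: "S [] = souslin P" unfolding S_def souslin_def by auto
  have Ssplit: "S u \<subseteq> (\<Union>i. S (u @ [i]))" for u
  proof
    fix Z assume "Z \<in> S u"
    then obtain \<sigma> where s: "map \<sigma> [0..<length u] = u" "\<forall>n. Z \<in> P (map \<sigma> [0..<Suc n])"
      unfolding S_def by blast
    have "map \<sigma> [0..<length (u @ [\<sigma> (length u)])] = u @ [\<sigma> (length u)]" using s(1) by simp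
    then have "Z \<in> S (u @ [\<sigma> (length u)])" unfolding S_def using s(2) by blast
    then show "Z \<in> (\<Union>i. S (u @ [i]))" by blast
  qed
  have SP: "S u \<subseteq> P u" if "u \<noteq> []" for u
  proof
    fix Z assume "Z \<in> S u"
    then obtain \<sigma> where s: "map \<sigma> [0..<length u] = u" "\<forall>n. Z \<in> P (map \<sigma> [0..<Suc n])"
      unfolding S_def by blast
    have "Suc (length u - 1) = length u" using that by simp
    then show "Z \<in> P u" using s by metis
  qed
  have SPinf: "S u \<subseteq> Pinf UNIV" for u
  proof
    fix Z assume "Z \<in> S u"
    then obtain \<sigma> where s: "\<forall>n. Z \<in> P (map \<sigma> [0..<Suc n])" unfolding S_def by blast
    then show "Z \<in> Pinf UNIV" using KP unfolding K_def by blast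
  qed
  define Q where "Q u = (if u = [] then Pinf UNIV else P u)" for u
  define H where "H u = hullE (S u) \<inter> Q u" for u
  have KQ: "K (Q u)" for u unfolding Q_def using KP K_Pinf by simp
  have KH: "K (H u)" for u unfolding H_def by (intro K_Int K_hull KQ)
  have SH: "S u \<subseteq> H u" for u
  proof -
    have "S u \<subseteq> hullE (S u)" by (rule hull_sup[OF SPinf])
    moreover have "S u \<subseteq> Q u" unfolding Q_def using SPinf SP by simp
    ultimately show ?thesis unfolding H_def by (rule Int_greatest)
  qed
  define D where "D u = H u - (\<Union>i. H (u @ [i]))" for u
  have KD: "K (D u)" for u unfolding D_def by (intro K_Diff K_UN KH)
  have RND: "RN (D u)" for u
  proof (rule hull_prop)
    show "CR (D u)" using KD unfolding K_def by blast
    have "S u \<subseteq> (\<Union>i. H (u @ [i]))" using Ssplit SH by blast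
    then show "D u \<subseteq> hullE (S u) - S u" unfolding D_def H_def by blast
  qed
  define R where "R = (\<Union>n. D (from_nat n))"
  have RNR: "RN R" unfolding R_def by (rule RN_UN, rule RND)
  have "H [] - R \<subseteq> souslin P"
  proof
    fix Z assume Z: "Z \<in> H [] - R"
    have nD: "Z \<notin> D u" for u
    proof
      assume "Z \<in> D u"
      then have "Z \<in> D (from_nat (to_nat u))" by simp
      then show False using Z unfolding R_def by blast
    qed
    define c where "c u = (SOME i. Z \<in> H (u @ [i]))" for u
    have step: "Z \<in> H u \<Longrightarrow> Z \<in> H (u @ [c u])" for u
    proof -
      assume "Z \<in> H u"
      then have "\<exists>i. Z \<in> H (u @ [i])" using nD[of u] unfolding D_def by blast
      then show ?thesis unfolding c_def by (rule someI_ex)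
    qed
    have inH: "Z \<in> H (pth c n)" for n
    proof (induction n)
      case 0 then show ?case using Z by simp
    next
      case (Suc n) then show ?case using step by simp
    qed
    define \<sigma> where "\<sigma> i = c (pth c i)" for i
    have "Z \<in> P (map \<sigma> [0..<Suc n])" for n
    proof -
      have "pth c (Suc n) = map \<sigma> [0..<Suc n]" unfolding \<sigma>_def by (rule pth_map)
      moreover have "map \<sigma> [0..<Suc n] \<noteq> []" by simp
      ultimately show ?thesis using inH[of "Suc n"] unfolding H_def Q_def by auto
    qed
    then show "Z \<in> souslin P" unfolding souslin_def by blast
  qed
  moreover have "souslin P \<subseteq> H []" using SH[of "[]"] S0 by simp
  ultimately have "CR (souslin P)" using CR_gen[of "H []" R] KH RNR unfolding K_def by blast
  moreover have "souslin P \<subseteq> Pinf UNIV" using SPinf[of "[]"] S0 by simp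
  ultimately show ?thesis unfolding K_def by blast
qed




abbreviation enum :: "nat set \<Rightarrow> nat \<Rightarrow> nat" where "enum \<equiv> Infinite_Set.enumerate"

lemma enum_agree:
  fixes S S' :: "nat set"
  assumes S: "infinite S" and S': "infinite S'" and agree: "S \<inter> {..<Kb} = S' \<inter> {..<Kb}"
  shows "enum S j < Kb \<Longrightarrow> enum S' j = enum S j"
proof (induction j)
  case 0
  let ?x = "enum S 0"
  have xS: "?x \<in> S" using enumerate_in_set[OF S] .
  have xS': "?x \<in> S'" using xS 0 agree by blast
  have xmin: "\<And>y. y \<in> S \<Longrightarrow> ?x \<le> y" unfolding enumerate_0 by (rule Least_le)
  have "(LEAST n. n \<in> S') = ?x"
  proof (rule Least_equality)
    show "?x \<in> S'" by (rule xS')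
    fix y assume y: "y \<in> S'"
    show "?x \<le> y"
    proof (rule ccontr)
      assume "\<not> ?x \<le> y"
      then have "y < ?x" by simp
      then have "y < Kb" using 0 by simp
      then have "y \<in> S" using y agree by blast
      then show False using xmin[of y] \<open>y < ?x\<close> by simp
    qed
  qed
  then show ?case unfolding enumerate_0 by simp
next
  case (Suc j)
  have lt: "enum S j < enum S (Suc j)" by (rule enumerate_step[OF S])
  then have IH: "enum S' j = enum S j" using Suc by simp
  let ?x = "enum S (Suc j)"
  have xS: "?x \<in> S" using enumerate_in_set[OF S] .
  have xS': "?x \<in> S'" using xS Suc.prems agree by blast
  have e1: "?x = (LEAST s. s \<in> S \<and> enum S j < s)" by (rule enumerate_Suc''[OF S])
  have xmin: "\<And>y. y \<in> S \<Longrightarrow> enum S j < y \<Longrightarrow> ?x \<le> y"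
    unfolding e1 by (rule Least_le) simp
  have "(LEAST s. s \<in> S' \<and> enum S' j < s) = ?x"
  proof (rule Least_equality)
    show "?x \<in> S' \<and> enum S' j < ?x" using xS' lt IH by simp
    fix y assume y: "y \<in> S' \<and> enum S' j < y"
    show "?x \<le> y"
    proof (rule ccontr)
      assume "\<not> ?x \<le> y"
      then have "y < ?x" by simp
      then have "y < Kb" using Suc.prems by simp
      then have "y \<in> S" using y agree by blast
      then show False using xmin[of y] y IH \<open>y < ?x\<close> by simp
    qed
  qed
  then show ?case using enumerate_Suc''[OF S'] by simp
qed

lemma cantor_nbhd:
  assumes "Pinf_open U" "Z \<in> U"
  shows "\<exists>n. \<forall>W\<in>Pinf UNIV. W \<inter> {..<n} = Z \<inter> {..<n} \<longrightarrow> W \<in> U"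
proof -
  obtain V :: "(nat \<Rightarrow> bool) set" where V: "open V" "U = {A \<in> Pinf UNIV. (\<lambda>n. n \<in> A) \<in> V}"
    using assms(1) unfolding Pinf_open_def by blast
  have zV: "(\<lambda>n. n \<in> Z) \<in> V" using assms(2) V(2) by blast
  have "openin (product_topology (\<lambda>i. euclidean) UNIV) V" using V(1) unfolding open_fun_def .
  from product_topology_open_contains_basis[OF this zV]
  obtain X :: "nat \<Rightarrow> bool set" where X: "(\<lambda>n. n \<in> Z) \<in> Pi\<^sub>E UNIV X" "\<And>i. openin euclidean (X i)"
     "finite {i. X i \<noteq> topspace euclidean}" "Pi\<^sub>E UNIV X \<subseteq> V"
    by blast
  obtain n where n: "\<And>i. i \<in> {i. X i \<noteq> UNIV} \<Longrightarrow> i < n"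
    using X(3) finite_nat_set_iff_bounded by auto
  have "\<forall>W\<in>Pinf UNIV. W \<inter> {..<n} = Z \<inter> {..<n} \<longrightarrow> W \<in> U"
  proof (intro ballI impI)
    fix W assume W: "W \<in> Pinf UNIV" "W \<inter> {..<n} = Z \<inter> {..<n}"
    have "(\<lambda>i. i \<in> W) \<in> Pi\<^sub>E UNIV X"
    proof (rule PiE_I)
      fix i :: nat
      show "(i \<in> W) \<in> X i"
      proof (cases "i < n")
        case True
        then have "(i \<in> W) = (i \<in> Z)" using W(2) by blast
        moreover have "(i \<in> Z) \<in> X i" using X(1) by (simp add: PiE_iff)
        ultimately show ?thesis by simp
      next
        case False
        then have "X i = UNIV" using n by (meson mem_Collect_eq)
        then show ?thesis by simp
      qed
    qed simp
    then have "(\<lambda>i. i \<in> W) \<in> V" using X(4) by blast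
    then show "W \<in> U" using W(1) V(2) by blast
  qed
  then show ?thesis by blast
qed


lemma Delta_ge:
  assumes M: "infinite M" and Cinf: "\<And>n. infinite (C n)"
  shows "2*i+1 \<le> enum (C (enum M (2*i))) (enum M (2*i+1))"
proof -
  have "2*i+1 \<le> enum M (2*i+1)" by (rule le_enumerate[OF M])
  also have "\<dots> \<le> enum (C (enum M (2*i))) (enum M (2*i+1))" by (rule le_enumerate[OF Cinf])
  finally show ?thesis .
qed

lemma Delta_inf:
  assumes M: "infinite M" and Cinf: "\<And>n. infinite (C n)" and disj: "\<And>i j. i \<noteq> j \<Longrightarrow> C i \<inter> C j = {}"
  shows "infinite (Delta C M)"
proof -
  define x where "x i = enum (C (enum M (2*i))) (enum M (2*i+1))" for i
  have mem: "x i \<in> C (enum M (2*i))" for i unfolding x_def by (rule enumerate_in_set[OF Cinf])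
  have "inj x"
  proof (rule injI)
    fix i j assume eq: "x i = x j"
    show "i = j"
    proof (rule ccontr)
      assume ne: "i \<noteq> j"
      have "enum M (2*i) \<noteq> enum M (2*j)" using ne strict_mono_enumerate[OF M] by (simp add: strict_mono_eq)
      then have "C (enum M (2*i)) \<inter> C (enum M (2*j)) = {}" by (rule disj)
      then show False using mem[of i] mem[of j] eq by auto
    qed
  qed
  then have "infinite (range x)" by (rule range_inj_infinite)
  moreover have "x = (\<lambda>i. enum (C (enum M (2*i))) (enum M (2*i+1)))"
    by (rule ext) (simp add: x_def)
  ultimately show ?thesis unfolding Delta_def by simp
qed

lemma Delta_low:
  assumes M: "infinite M" and Cinf: "\<And>n. infinite (C n)"
  shows "Delta C M \<inter> {..<n} = (\<lambda>i. enum (C (enum M (2*i))) (enum M (2*i+1))) ` {..<n} \<inter> {..<n}"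
proof
  show "Delta C M \<inter> {..<n} \<subseteq> (\<lambda>i. enum (C (enum M (2*i))) (enum M (2*i+1))) ` {..<n} \<inter> {..<n}"
  proof
    fix y assume y: "y \<in> Delta C M \<inter> {..<n}"
    then obtain i where i: "y = enum (C (enum M (2*i))) (enum M (2*i+1))" unfolding Delta_def by blast
    have "2*i+1 \<le> y" using Delta_ge[OF M Cinf, of i] i by simp
    then have "i < n" using y by simp
    then show "y \<in> (\<lambda>i. enum (C (enum M (2*i))) (enum M (2*i+1))) ` {..<n} \<inter> {..<n}"
      using i y by blast
  qed
  show "(\<lambda>i. enum (C (enum M (2*i))) (enum M (2*i+1))) ` {..<n} \<inter> {..<n} \<subseteq> Delta C M \<inter> {..<n}"
    unfolding Delta_def by blast
qed

lemma pre_open_EO: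
  assumes Cinf: "\<And>n. infinite (C n)" and disj: "\<And>i j. i \<noteq> j \<Longrightarrow> C i \<inter> C j = {}"
    and U: "Pinf_open U"
  shows "EO {M \<in> Pinf UNIV. Delta C M \<in> U}"
  unfolding EO_def
proof
  fix M assume "M \<in> {M \<in> Pinf UNIV. Delta C M \<in> U}"
  then have M: "infinite M" "Delta C M \<in> U" unfolding Pinf_def by auto
  obtain n where n: "\<And>W. W \<in> Pinf UNIV \<Longrightarrow> W \<inter> {..<n} = Delta C M \<inter> {..<n} \<Longrightarrow> W \<in> U"
    using cantor_nbhd[OF U M(2)] by blast
  define Kb where "Kb = Suc (enum M (2*n))"
  have "E Kb (M \<inter> {..<Kb}) UNIV \<subseteq> {M \<in> Pinf UNIV. Delta C M \<in> U}"
  proof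
    fix M' assume "M' \<in> E Kb (M \<inter> {..<Kb}) UNIV"
    then have M': "infinite M'" "M' \<inter> {..<Kb} = M \<inter> {..<Kb}" unfolding E_def by auto
    have agree: "enum M' j = enum M j" if "j \<le> 2*n" for j
    proof (rule enum_agree[OF M(1) M'(1)])
      show "M \<inter> {..<Kb} = M' \<inter> {..<Kb}" using M'(2) by simp
      have "enum M j \<le> enum M (2*n)" using that M(1) by simp
      then show "enum M j < Kb" unfolding Kb_def by simp
    qed
    have "(\<lambda>i. enum (C (enum M' (2*i))) (enum M' (2*i+1))) ` {..<n} =
          (\<lambda>i. enum (C (enum M (2*i))) (enum M (2*i+1))) ` {..<n}"
    proof (rule image_cong[OF refl])
      fix i assume "i \<in> {..<n}"
      then have "2*i \<le> 2*n" "2*i+1 \<le> 2*n" by auto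
      then show "enum (C (enum M' (2*i))) (enum M' (2*i+1)) =
          enum (C (enum M (2*i))) (enum M (2*i+1))" using agree by simp
    qed
    then have "Delta C M' \<inter> {..<n} = Delta C M \<inter> {..<n}"
      using Delta_low[OF M'(1) Cinf] Delta_low[OF M(1) Cinf] by simp
    moreover have "Delta C M' \<in> Pinf UNIV" using Delta_inf[OF M'(1) Cinf disj] unfolding Pinf_def by simp
    ultimately have "Delta C M' \<in> U" using n by blast
    moreover have "M' \<in> Pinf UNIV" using M'(1) unfolding Pinf_def by simp
    ultimately show "M' \<in> {M \<in> Pinf UNIV. Delta C M \<in> U}" by blast
  qed
  moreover have "M \<in> E Kb (M \<inter> {..<Kb}) UNIV" using M(1) unfolding E_def by simp
  ultimately show "\<exists>m t C'. M \<in> E m t C' \<and> E m t C' \<subseteq> {M \<in> Pinf UNIV. Delta C M \<in> U}" by blast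
qed




lemma pre_K:
  assumes Cinf: "\<And>n. infinite (C n)" and disj: "\<And>i j. i \<noteq> j \<Longrightarrow> C i \<inter> C j = {}"
  shows "X \<in> C_sets (Pinf UNIV) Pinf_open \<Longrightarrow> K {M \<in> Pinf UNIV. Delta C M \<in> X}"
proof (induction rule: C_sets.induct)
  case (C_open U)
  have "CR {M \<in> Pinf UNIV. Delta C M \<in> U}" by (rule EO_CR[OF pre_open_EO[OF Cinf disj C_open]])
  then show ?case unfolding K_def by blast
next
  case (C_compl A)
  have DP: "M \<in> Pinf UNIV \<Longrightarrow> Delta C M \<in> Pinf UNIV" for M
    using Delta_inf[OF _ Cinf disj] unfolding Pinf_def by simp
  have "{M \<in> Pinf UNIV. Delta C M \<in> Pinf UNIV - A} = Pinf UNIV - {M \<in> Pinf UNIV. Delta C M \<in> A}"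
    using DP by blast
  then show ?case using K_compl[OF C_compl.IH] by simp
next
  case (C_union A)
  have "{M \<in> Pinf UNIV. Delta C M \<in> (\<Union>n. A n)} = (\<Union>n. {M \<in> Pinf UNIV. Delta C M \<in> A n})" by blast
  then show ?case using K_UN[OF C_union.IH] by simp
next
  case (C_souslin P)
  have "{M \<in> Pinf UNIV. Delta C M \<in> souslin P} = souslin (\<lambda>s. {M \<in> Pinf UNIV. Delta C M \<in> P s})"
    unfolding souslin_def by blast
  then show ?case using K_souslin[OF C_souslin.IH] by simp
qed

lemma enum_range:
  assumes f: "strict_mono (f :: nat \<Rightarrow> nat)"
  shows "enum (range f) n = f n"
proof -
  have inf: "infinite (range f)" using f strict_mono_imp_inj_on range_inj_infinite by blast
  show ?thesis
  proof (induction n)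
    case 0
    have "(LEAST x. x \<in> range f) = f 0"
    proof (rule Least_equality)
      show "f 0 \<in> range f" by simp
      fix y assume "y \<in> range f"
      then obtain k where "y = f k" by blast
      then show "f 0 \<le> y" using f by (simp add: strict_mono_less_eq)
    qed
    then show ?case by (simp add: enumerate_0)
  next
    case (Suc n)
    have "(LEAST s. s \<in> range f \<and> enum (range f) n < s) = f (Suc n)"
    proof (rule Least_equality)
      show "f (Suc n) \<in> range f \<and> enum (range f) n < f (Suc n)" using Suc f by (simp add: strict_mono_less)
      fix y assume y: "y \<in> range f \<and> enum (range f) n < y"
      then obtain k where k: "y = f k" by blast
      then have "n < k" using y Suc f by (simp add: strict_mono_less)
      then show "f (Suc n) \<le> y" using k f by (simp add: strict_mono_less_eq)
    qed
    then show ?case using enumerate_Suc''[OF inf] by simp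
  qed
qed

primrec gseq :: "(nat \<Rightarrow> nat \<times> nat) \<Rightarrow> nat \<Rightarrow> nat \<times> nat" where
  "gseq pk 0 = pk 0"
| "gseq pk (Suc k) = pk (snd (gseq pk k))"

lemma mfam_hit:
  assumes MF: "M_family \<A>" and CA: "\<And>n. C n \<in> \<A>" and disj: "\<And>i j. i \<noteq> j \<Longrightarrow> C i \<inter> C j = {}"
    and L: "infinite L"
  shows "\<exists>M. M \<subseteq> L \<and> infinite M \<and> Delta C M \<in> \<A>"
proof -
  have c3: "\<A> \<subseteq> Pinf UNIV \<and>
     (\<forall>A\<in>\<A>. \<forall>B. B \<subseteq> A \<and> infinite B \<longrightarrow> B \<in> \<A>) \<and>
     (\<forall>As :: nat \<Rightarrow> nat set. (\<forall>n. As n \<in> \<A>) \<longrightarrow>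
        (\<exists>A\<in>\<A>. \<forall>n. finite (A - (\<Union>i\<in>{n..}. As i))))" using MF unfolding M_family_def .
  have sub: "\<A> \<subseteq> Pinf UNIV" using c3 by (rule conjunct1)
  have her: "\<And>A B. A \<in> \<A> \<Longrightarrow> B \<subseteq> A \<Longrightarrow> infinite B \<Longrightarrow> B \<in> \<A>"
    using c3 by simp
  have diag: "\<And>As :: nat \<Rightarrow> nat set. (\<forall>n. As n \<in> \<A>) \<Longrightarrow> (\<exists>A\<in>\<A>. \<forall>n. finite (A - (\<Union>i\<in>{n..}. As i)))"
  proof -
    fix As :: "nat \<Rightarrow> nat set" assume "\<forall>n. As n \<in> \<A>"
    then show "\<exists>A\<in>\<A>. \<forall>n. finite (A - (\<Union>i\<in>{n..}. As i))" using c3 by blast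
  qed
  have Cinf: "infinite (C n)" for n using CA[of n] sub unfolding Pinf_def by blast
  define l where "l = enum L"
  define As where "As i = (\<lambda>j. enum (C (l i)) j) ` (L \<inter> {l i<..})" for i
  have AsA: "As i \<in> \<A>" for i
  proof (rule her[OF CA[of "l i"]])
    show "As i \<subseteq> C (l i)" unfolding As_def using enumerate_in_set[OF Cinf] by blast
    have "inj (enum (C (l i)))" by (rule inj_enumerate[OF Cinf])
    then have "inj_on (enum (C (l i))) (L \<inter> {l i<..})" by (rule inj_on_subset) simp
    then show "infinite (As i)" unfolding As_def
      using infinite_gt[OF L, of "l i"] finite_image_iff by blast
  qed
  obtain A where A: "A \<in> \<A>" "\<And>n. finite (A - (\<Union>i\<in>{n..}. As i))" using diag[of As] AsA by blast
  have infA: "infinite A" using A(1) sub unfolding Pinf_def by blast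
  have pick: "\<exists>p q. Kb < p \<and> p < q \<and> p \<in> L \<and> q \<in> L \<and> enum (C p) q \<in> A" for Kb
  proof -
    let ?U = "\<Union>i\<in>{Suc Kb..}. As i"
    have "A \<inter> ?U \<noteq> {}"
    proof
      assume "A \<inter> ?U = {}"
      then have "A - ?U = A" by blast
      then show False using A(2)[of "Suc Kb"] infA by simp
    qed
    then obtain a i where ai: "a \<in> A" "i \<ge> Suc Kb" "a \<in> As i" by blast
    then obtain j where j: "j \<in> L" "l i < j" "a = enum (C (l i)) j" unfolding As_def by blast
    have "i \<le> l i" unfolding l_def by (rule le_enumerate[OF L])
    moreover have "l i \<in> L" unfolding l_def by (rule enumerate_in_set[OF L])
    moreover have "Kb < l i" using ai(2) \<open>i \<le> l i\<close> by simp
    ultimately show ?thesis using ai(1) j by (intro exI[of _ "l i"] exI[of _ j]) simp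
  qed
  define pk where "pk Kb = (SOME pq. Kb < fst pq \<and> fst pq < snd pq \<and> fst pq \<in> L \<and> snd pq \<in> L \<and> enum (C (fst pq)) (snd pq) \<in> A)" for Kb
  have pkp: "Kb < fst (pk Kb) \<and> fst (pk Kb) < snd (pk Kb) \<and> fst (pk Kb) \<in> L \<and> snd (pk Kb) \<in> L \<and> enum (C (fst (pk Kb))) (snd (pk Kb)) \<in> A" for Kb
  proof -
    obtain p q where "Kb < p \<and> p < q \<and> p \<in> L \<and> q \<in> L \<and> enum (C p) q \<in> A" using pick by blast
    then have "\<exists>pq. Kb < fst pq \<and> fst pq < snd pq \<and> fst pq \<in> L \<and> snd pq \<in> L \<and> enum (C (fst pq)) (snd pq) \<in> A"
      by (intro exI[of _ "(p,q)"]) simp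
    then show ?thesis unfolding pk_def by (rule someI_ex)
  qed
  define pp where "pp k = fst (gseq pk k)" for k
  define qq where "qq k = snd (gseq pk k)" for k
  have pq1: "pp k < qq k \<and> pp k \<in> L \<and> qq k \<in> L \<and> enum (C (pp k)) (qq k) \<in> A" for k
  proof (cases k)
    case 0 then show ?thesis unfolding pp_def qq_def using pkp by simp
  next
    case (Suc k') then show ?thesis unfolding pp_def qq_def using pkp by simp
  qed
  have pq2: "qq k < pp (Suc k)" for k unfolding pp_def qq_def using pkp by simp
  define f where "f m = (if even m then pp (m div 2) else qq (m div 2))" for m
  have "f m < f (Suc m)" for m
  proof (cases "even m")
    case True
    then have "Suc m div 2 = m div 2" by presburger
    then show ?thesis unfolding f_def using True pq1 by simp
  next
    case False
    then have "Suc m div 2 = Suc (m div 2)" by presburger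
    then show ?thesis unfolding f_def using False pq2 by simp
  qed
  then have smf: "strict_mono f" by (simp add: strict_mono_Suc_iff)
  define M where "M = range f"
  have hML: "M \<subseteq> L" unfolding M_def f_def using pq1 by auto
  have infM: "infinite M" unfolding M_def using smf strict_mono_imp_inj_on range_inj_infinite by blast
  have f2: "f (2*i) = pp i" "f (2*i+1) = qq i" for i unfolding f_def by simp_all
  have "Delta C M = range (\<lambda>i. enum (C (pp i)) (qq i))"
    unfolding Delta_def M_def enum_range[OF smf] f2 by simp
  then have "Delta C M \<subseteq> A" using pq1 by auto
  moreover have "infinite (Delta C M)" by (rule Delta_inf[OF infM Cinf disj])
  ultimately have "Delta C M \<in> \<A>" using her[OF A(1)] by blast
  then show ?thesis using hML infM by blast
qed

theorem lemma7:
  fixes \<A> :: "nat set set" and C :: "nat \<Rightarrow> nat set"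
  assumes "C_measurable \<A>"
    and "M_family \<A>"
    and "\<And>n. C n \<in> \<A>"
    and "\<And>i j. i \<noteq> j \<Longrightarrow> C i \<inter> C j = {}"
  shows "\<forall>N\<in>Pinf UNIV. \<exists>L\<in>Pinf N. \<forall>M\<in>Pinf L. Delta C M \<in> \<A>"
proof
  fix N :: "nat set" assume N: "N \<in> Pinf UNIV"
  have sub: "\<A> \<subseteq> Pinf UNIV" using assms(2) unfolding M_family_def by (rule conjunct1)
  have Cinf: "infinite (C n)" for n using assms(3)[of n] sub unfolding Pinf_def by blast
  define D where "D = {M \<in> Pinf UNIV. Delta C M \<in> \<A>}"
  have "K D" unfolding D_def
    by (rule pre_K[OF Cinf assms(4)]) (use assms(1) in \<open>unfold C_measurable_def\<close>)
  then have CRD: "CR D" unfolding K_def by blast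
  have infN: "infinite N" using N unfolding Pinf_def by simp
  obtain B where B: "B \<subseteq> N" "infinite B" "E 0 {} B \<subseteq> D \<or> E 0 {} B \<inter> D = {}"
    using CRD[unfolded CR_def, rule_format, of N 0 "{}", OF infN] by blast
  have EB: "E 0 {} B = Pinf B" unfolding E_def Pinf_def by (auto simp: atLeast_0)
  show "\<exists>L\<in>Pinf N. \<forall>M\<in>Pinf L. Delta C M \<in> \<A>"
  proof (cases "E 0 {} B \<subseteq> D")
    case True
    have "\<forall>M\<in>Pinf B. Delta C M \<in> \<A>" using True unfolding EB D_def by blast
    moreover have "B \<in> Pinf N" using B unfolding Pinf_def by simp
    ultimately show ?thesis by blast
  next
    case False
    have dis: "Pinf B \<inter> D = {}" using False B(3) unfolding EB by metis
    have ex: "\<exists>M. M \<subseteq> B \<and> infinite M \<and> Delta C M \<in> \<A>"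
      by (rule mfam_hit[OF assms(2) assms(3) assms(4) B(2)])
    then obtain M where M0: "M \<subseteq> B \<and> infinite M \<and> Delta C M \<in> \<A>" by (elim exE)
    then have M: "M \<subseteq> B" "infinite M" "Delta C M \<in> \<A>" by simp_all
    have m1: "M \<in> Pinf B" using M(1,2) unfolding Pinf_def by simp
    have m2: "M \<in> D" using M(2,3) unfolding Pinf_def D_def by simp
    have False using m1 m2 dis by blast
    then show ?thesis by (rule FalseE)
  qed
qed


end
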